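(* Let $\Gamma\subset\mathbb{O}$ be countable. Then there exists a countable totally ordered subset $\hat\Gamma\subset\mathbb{O}$ with $\sup(\hat\Gamma)=\sup(\Gamma)$ in $\overline{\mathbb{O}}$. Moreover, if $\Gamma\subset\mathbb{B}$ (respectively $\Gamma\subset\mathbb{L}$), then $\hat\Gamma$ can be taken with $\hat\Gamma\subset\mathbb{B}$ (respectively $\hat\Gamma\subset\mathbb{L}$).
   Context: Let $\mathcal{O}$ be the set of non-decreasing sequences $a:\mathbb{N}\to[0,\infty)$, $a\approx b$ iff $c_1a(n)\le b(n)\le c_2a(n)$ for all $n$ for some constants $0<c_1\le c_2$, $\mathbb{O}=\mathcal{O}/\!\approx$ with classes $[a(n)]$, ordered by $[a(n)]\le[b(n)]$ iff $a(n)\le Cb(n)$ for all $n$ for some $C>0$; $\overline{\mathbb{O}}$ is its Dedekind–MacNeille completion. $\mathbb{B}$ is the set of classes with $a(n+1)\le Ca(n)$ for all $n$ for some $C>0$; $\mathbb{L}$ is the set of classes with $[a(mn)]=[a(n)]$ for some integer $m\ge2$. *)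

theory Defs
  imports Complex_Main "HOL-Library.Countable_Set"
begin

definition Oseq :: "(nat \<Rightarrow> real) \<Rightarrow> bool" where
  "Oseq a \<longleftrightarrow> mono a \<and> (\<forall>n. 0 \<le> a n)"

definition approx :: "(nat \<Rightarrow> real) \<Rightarrow> (nat \<Rightarrow> real) \<Rightarrow> bool" where
  "approx a b \<longleftrightarrow> (\<exists>c1 c2. 0 < c1 \<and> c1 \<le> c2 \<and> (\<forall>n. c1 * a n \<le> b n \<and> b n \<le> c2 * a n))"

definition cls :: "(nat \<Rightarrow> real) \<Rightarrow> (nat \<Rightarrow> real) set" where
  "cls a = {b. Oseq b \<and> approx a b}"

definition Oclasses :: "(nat \<Rightarrow> real) set set" where
  "Oclasses = cls ` {a. Oseq a}"

definition Ole :: "(nat \<Rightarrow> real) set \<Rightarrow> (nat \<Rightarrow> real) set \<Rightarrow> bool" where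
  "Ole A B \<longleftrightarrow> (\<exists>a\<in>A. \<exists>b\<in>B. \<exists>C>0. \<forall>n. a n \<le> C * b n)"

definition BB :: "(nat \<Rightarrow> real) set set" where
  "BB = {A \<in> Oclasses. \<exists>a\<in>A. \<exists>C>0. \<forall>n. a (Suc n) \<le> C * a n}"

definition LL :: "(nat \<Rightarrow> real) set set" where
  "LL = {A \<in> Oclasses. \<exists>a\<in>A. \<exists>m::nat. 2 \<le> m \<and> cls (\<lambda>n. a (m * n)) = cls a}"

definition Oupper :: "(nat \<Rightarrow> real) set set \<Rightarrow> (nat \<Rightarrow> real) set set" where
  "Oupper S = {B \<in> Oclasses. \<forall>A\<in>S. Ole A B}"

definition Olower :: "(nat \<Rightarrow> real) set set \<Rightarrow> (nat \<Rightarrow> real) set set" where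
  "Olower S = {A \<in> Oclasses. \<forall>B\<in>S. Ole A B}"

text \<open>Dedekind-MacNeille completion of O: the cuts X \<subseteq> O with X = (X^u)^l,
  ordered by inclusion; O embeds via A \<mapsto> ({A}^u)^l.  The supremum in the
  completion of (the image of) a subset S \<subseteq> O is the cut (S^u)^l.\<close>
definition DM_completion :: "(nat \<Rightarrow> real) set set set" where
  "DM_completion = {X. X \<subseteq> Oclasses \<and> Olower (Oupper X) = X}"

definition DM_sup :: "(nat \<Rightarrow> real) set set \<Rightarrow> (nat \<Rightarrow> real) set set" where
  "DM_sup S = Olower (Oupper S)"

definition Ototal :: "(nat \<Rightarrow> real) set set \<Rightarrow> bool" where
  "Ototal S \<longleftrightarrow> (\<forall>A\<in>S. \<forall>B\<in>S. Ole A B \<or> Ole B A)"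

end

theory Submission
  imports Defs
begin

lemma approx_refl: "approx a a"
  unfolding approx_def by (rule exI[of _ 1], rule exI[of _ 1]) auto

lemma approx_sym: assumes "approx a b" shows "approx b a"
proof -
  obtain c1 c2 where c: "0 < c1" "c1 \<le> c2" "\<forall>n. c1 * a n \<le> b n \<and> b n \<le> c2 * a n"
    using assms unfolding approx_def by blast
  have "\<forall>n. (1/c2) * b n \<le> a n \<and> a n \<le> (1/c1) * b n"
  proof
    fix n
    have h: "c1 * a n \<le> b n" "b n \<le> c2 * a n" using c by auto
    have "c2 > 0" using c by auto
    then show "(1/c2) * b n \<le> a n \<and> a n \<le> (1/c1) * b n"
      using h c(1) by (auto simp: field_simps mult.commute)
  qed
  moreover have "0 < 1/c2" "1/c2 \<le> 1/c1" using c by (auto simp: field_simps)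
  ultimately show ?thesis unfolding approx_def by blast
qed

lemma approx_trans: assumes "approx a b" "approx b c" shows "approx a c"
proof -
  obtain c1 c2 where c: "0 < c1" "c1 \<le> c2" "\<forall>n. c1 * a n \<le> b n \<and> b n \<le> c2 * a n"
    using assms(1) unfolding approx_def by blast
  obtain d1 d2 where d: "0 < d1" "d1 \<le> d2" "\<forall>n. d1 * b n \<le> c n \<and> c n \<le> d2 * b n"
    using assms(2) unfolding approx_def by blast
  have "\<forall>n. (d1*c1) * a n \<le> c n \<and> c n \<le> (d2*c2) * a n"
  proof
    fix n
    have "d1 * (c1 * a n) \<le> d1 * b n" using c d by (intro mult_left_mono) auto
    moreover have "d2 * b n \<le> d2 * (c2 * a n)" using c d by (intro mult_left_mono) auto
    ultimately show "(d1*c1) * a n \<le> c n \<and> c n \<le> (d2*c2) * a n" using d(3)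
      by (auto simp: mult.assoc intro: order_trans)
  qed
  moreover have "0 < d1*c1" "d1*c1 \<le> d2*c2" using c d by (auto intro: mult_mono)
  ultimately show ?thesis unfolding approx_def by blast
qed

lemma approx_cls: assumes "approx a b" shows "cls a = cls b"
  using assms unfolding cls_def
  by (auto intro: approx_trans approx_sym)

lemma self_cls: "Oseq a \<Longrightarrow> a \<in> cls a"
  unfolding cls_def by (auto intro: approx_refl)

lemma cls_Oclasses: "Oseq a \<Longrightarrow> cls a \<in> Oclasses"
  unfolding Oclasses_def by auto

lemma mem_Oclasses: assumes "A \<in> Oclasses" "a \<in> A" shows "Oseq a \<and> A = cls a"
proof -
  obtain x where x: "Oseq x" "A = cls x" using assms(1) unfolding Oclasses_def by auto
  then have "Oseq a" "approx x a" using assms(2) unfolding cls_def by auto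
  then show ?thesis using x approx_cls by auto
qed

lemma Oclasses_ne: "A \<in> Oclasses \<Longrightarrow> \<exists>a. a \<in> A"
  unfolding Oclasses_def using self_cls by auto

lemma cls_dom: assumes "a \<in> cls x" "a' \<in> cls x" shows "\<exists>c>0. \<forall>n. a n \<le> c * a' n"
proof -
  obtain c1 c2 where c: "0 < c1" "c1 \<le> c2" "\<forall>n. c1 * x n \<le> a n \<and> a n \<le> c2 * x n"
    using assms(1) unfolding cls_def approx_def by blast
  obtain d1 d2 where d: "0 < d1" "d1 \<le> d2" "\<forall>n. d1 * x n \<le> a' n \<and> a' n \<le> d2 * x n"
    using assms(2) unfolding cls_def approx_def by blast
  have "\<forall>n. a n \<le> (c2/d1) * a' n"
  proof
    fix n
    have "a n \<le> c2 * x n" using c by auto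
    also have "\<dots> = (c2/d1) * (d1 * x n)" using d by auto
    also have "\<dots> \<le> (c2/d1) * a' n" using c d by (intro mult_left_mono) auto
    finally show "a n \<le> (c2/d1) * a' n" .
  qed
  moreover have "c2/d1 > 0" using c d by auto
  ultimately show ?thesis by blast
qed

lemma Ole_reps:
  assumes "A \<in> Oclasses" "B \<in> Oclasses" "Ole A B" "a \<in> A" "b \<in> B"
  shows "\<exists>C>0. \<forall>n. a n \<le> C * b n"
proof -
  obtain a' b' C where h: "a' \<in> A" "b' \<in> B" "C > 0" "\<forall>n. a' n \<le> C * b' n"
    using assms(3) unfolding Ole_def by blast
  obtain x where "A = cls x" using assms(1) unfolding Oclasses_def by auto
  then obtain c1 where c1: "c1 > 0" "\<forall>n. a n \<le> c1 * a' n" using cls_dom assms(4) h(1) by blast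
  obtain y where "B = cls y" using assms(2) unfolding Oclasses_def by auto
  then obtain c2 where c2: "c2 > 0" "\<forall>n. b' n \<le> c2 * b n" using cls_dom assms(5) h(2) by blast
  have "\<forall>n. a n \<le> (c1*C*c2) * b n"
  proof
    fix n
    have "a n \<le> c1 * a' n" using c1 by auto
    also have "\<dots> \<le> c1 * (C * b' n)" using c1 h by (intro mult_left_mono) auto
    also have "\<dots> \<le> c1 * (C * (c2 * b n))" using c1 h c2 by (intro mult_left_mono) auto
    finally show "a n \<le> (c1*C*c2) * b n" by (simp add: mult.assoc)
  qed
  moreover have "c1*C*c2 > 0" using c1 c2 h by auto
  ultimately show ?thesis by blast
qed

lemma Ole_intro: "a \<in> A \<Longrightarrow> b \<in> B \<Longrightarrow> C > 0 \<Longrightarrow> \<forall>n. a n \<le> C * b n \<Longrightarrow> Ole A B"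
  unfolding Ole_def by blast

lemma Oseq_max: "Oseq a \<Longrightarrow> Oseq b \<Longrightarrow> Oseq (\<lambda>n. max (a n) (b n))"
proof -
  assume h: "Oseq a" "Oseq b"
  have "mono (\<lambda>n. max (a n) (b n))"
    using h unfolding Oseq_def mono_def by (meson max.mono)
  moreover have "\<forall>n. 0 \<le> max (a n) (b n)" using h unfolding Oseq_def by (simp add: le_max_iff_disj)
  ultimately show ?thesis unfolding Oseq_def by blast
qed

fun Mx :: "(nat \<Rightarrow> nat \<Rightarrow> real) \<Rightarrow> nat \<Rightarrow> nat \<Rightarrow> real" where
  "Mx r 0 = r 0"
| "Mx r (Suc k) = (\<lambda>n. max (Mx r k n) (r (Suc k) n))"

lemma Mx_ge: "r k n \<le> Mx r k n"
  by (cases k) auto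

lemma Mx_mono: "j \<le> k \<Longrightarrow> Mx r j n \<le> Mx r k n"
proof (induction k)
  case 0 then show ?case by auto
next
  case (Suc k) then show ?case by (cases "j = Suc k") (auto intro: max.coboundedI1)
qed

lemma generic:
  assumes G: "\<Gamma> \<subseteq> Oclasses" "countable \<Gamma>" "\<Gamma> \<noteq> {}"
    and ex: "\<forall>A\<in>\<Gamma>. \<exists>a\<in>A. Q a"
    and cl: "\<And>a b. Oseq a \<Longrightarrow> Oseq b \<Longrightarrow> Q a \<Longrightarrow> Q b \<Longrightarrow> Q (\<lambda>n. max (a n) (b n))"
  shows "\<exists>T. (\<forall>A\<in>T. \<exists>a. Oseq a \<and> Q a \<and> A = cls a) \<and> T \<subseteq> Oclasses \<and> countable T \<and> Ototal T
           \<and> DM_sup T = DM_sup \<Gamma>"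
proof -
  define g where "g = from_nat_into \<Gamma>"
  have rg: "range g = \<Gamma>" using G unfolding g_def by (simp add: range_from_nat_into)
  have "\<forall>i. \<exists>a. a \<in> g i \<and> Q a" using ex rg by blast
  from choice[OF this] obtain r where r0: "\<forall>i. r i \<in> g i \<and> Q (r i)" by blast
  have r: "\<And>i. r i \<in> g i \<and> Q (r i)" using r0 by blast
  have gO: "\<And>i. g i \<in> Oclasses" using rg G by auto
  have rO: "Oseq (r i) \<and> g i = cls (r i)" for i
  proof -
    have "r i \<in> g i" using r by blast
    then show ?thesis by (rule mem_Oclasses[OF gO])
  qed
  have MO: "Oseq (Mx r k) \<and> Q (Mx r k)" for k
  proof (induction k)
    case 0 show ?case using rO[of 0] r[of 0] by simp
  next
    case (Suc k)
    have "Oseq (r (Suc k))" "Q (r (Suc k))" using rO r by auto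
    then show ?case using Suc cl Oseq_max by simp
  qed
  define T where "T = range (\<lambda>k. cls (Mx r k))"
  have TO: "T \<subseteq> Oclasses" using MO cls_Oclasses unfolding T_def by auto
  have tot: "Ototal T"
  proof -
    have h: "\<forall>j k. j \<le> k \<longrightarrow> Ole (cls (Mx r j)) (cls (Mx r k))"
    proof (intro allI impI)
      fix j k :: nat assume "j \<le> k"
      then have "\<forall>n. Mx r j n \<le> 1 * Mx r k n" using Mx_mono by simp
      moreover have "Mx r j \<in> cls (Mx r j)" "Mx r k \<in> cls (Mx r k)" using MO self_cls by auto
      ultimately show "Ole (cls (Mx r j)) (cls (Mx r k))" using Ole_intro[of "Mx r j" _ "Mx r k" _ 1] by simp
    qed
    show ?thesis unfolding Ototal_def T_def
    proof (intro ballI)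
      fix A B assume "A \<in> range (\<lambda>k. cls (Mx r k))" "B \<in> range (\<lambda>k. cls (Mx r k))"
      then obtain j k where "A = cls (Mx r j)" "B = cls (Mx r k)" by blast
      then show "Ole A B \<or> Ole B A" using h nat_le_linear[of j k] by blast
    qed
  qed
  have up: "Oupper T = Oupper \<Gamma>"
  proof (rule set_eqI)
    fix B
    show "B \<in> Oupper T \<longleftrightarrow> B \<in> Oupper \<Gamma>"
    proof (cases "B \<in> Oclasses")
      case False then show ?thesis unfolding Oupper_def by auto
    next
      case True
      obtain b where b: "b \<in> B" using Oclasses_ne True by blast
      have "(\<forall>A\<in>T. Ole A B) \<longleftrightarrow> (\<forall>A\<in>\<Gamma>. Ole A B)"
      proof
        assume h: "\<forall>A\<in>T. Ole A B"
        show "\<forall>A\<in>\<Gamma>. Ole A B"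
        proof
          fix A assume "A \<in> \<Gamma>"
          then obtain i where i: "A = g i" using rg by auto
          have "Ole (cls (Mx r i)) B" using h unfolding T_def by auto
          moreover have "cls (Mx r i) \<in> Oclasses" using MO cls_Oclasses by blast
          moreover have "Mx r i \<in> cls (Mx r i)" using MO self_cls by blast
          ultimately have "\<exists>C>0. \<forall>n. Mx r i n \<le> C * b n"
            using Ole_reps[OF _ True _ _ b] by simp
          then obtain C where C: "C > 0" "\<forall>n. Mx r i n \<le> C * b n" by blast
          have le: "\<forall>n. r i n \<le> C * b n"
          proof
            fix n show "r i n \<le> C * b n" using C(2) Mx_ge[of r i n] by (meson order_trans)
          qed
          have ri: "r i \<in> A" using r i by blast
          show "Ole A B" by (rule Ole_intro[OF ri b C(1) le])
        qed
      next
        assume h: "\<forall>A\<in>\<Gamma>. Ole A B"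
        have "\<forall>i. \<exists>C. C > 0 \<and> (\<forall>n. r i n \<le> C * b n)"
        proof
          fix i
          have "Ole (g i) B" using h rg by blast
          have "r i \<in> g i" using r by blast
          from Ole_reps[OF gO True \<open>Ole (g i) B\<close> this b] show "\<exists>C. C > 0 \<and> (\<forall>n. r i n \<le> C * b n)" by simp
        qed
        from choice[OF this] obtain Cf where Cf0: "\<forall>i. Cf i > 0 \<and> (\<forall>n. r i n \<le> Cf i * b n)" by blast
        have Cf: "\<And>i. Cf i > 0 \<and> (\<forall>n. r i n \<le> Cf i * b n)" using Cf0 by blast
        have bnn: "\<forall>n. 0 \<le> b n" using mem_Oclasses[OF True b] unfolding Oseq_def by auto
        have "\<exists>C>0. \<forall>n. Mx r k n \<le> C * b n" for k
        proof (induction k)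
          case 0 then show ?case using Cf[of 0] by auto
        next
          case (Suc k)
          then obtain C where C: "C > 0" "\<forall>n. Mx r k n \<le> C * b n" by blast
          define D where "D = max C (Cf (Suc k))"
          have "\<forall>n. Mx r (Suc k) n \<le> D * b n"
          proof
            fix n
            have "C * b n \<le> D * b n" "Cf (Suc k) * b n \<le> D * b n"
              using bnn[rule_format, of n] unfolding D_def by (simp_all add: mult_right_mono)
            moreover have "Mx r k n \<le> C * b n" "r (Suc k) n \<le> Cf (Suc k) * b n"
              using C Cf[of "Suc k"] by auto
            ultimately show "Mx r (Suc k) n \<le> D * b n" by simp
          qed
          moreover have "D > 0" using C unfolding D_def by auto
          ultimately show ?case by blast
        qed
        then show "\<forall>A\<in>T. Ole A B" unfolding T_def
        proof (intro ballI)
          fix A assume hk: "\<And>k. \<exists>C>0. \<forall>n. Mx r k n \<le> C * b n" and "A \<in> range (\<lambda>k. cls (Mx r k))"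
          then obtain k where k: "A = cls (Mx r k)" by blast
          obtain C where "C > 0" "\<forall>n. Mx r k n \<le> C * b n" using hk by blast
          then show "Ole A B" unfolding k using MO[of k] by (intro Ole_intro[OF self_cls b]) auto
        qed
      qed
      then show ?thesis using True unfolding Oupper_def by simp
    qed
  qed
  have "\<forall>A\<in>T. \<exists>a. Oseq a \<and> Q a \<and> A = cls a" using MO unfolding T_def by auto
  moreover have "countable T" unfolding T_def by auto
  moreover have "DM_sup T = DM_sup \<Gamma>" unfolding DM_sup_def up ..
  ultimately show ?thesis using TO tot by (intro exI[of _ T]) simp
qed

lemma mult_iter:
  fixes f :: "nat \<Rightarrow> real"
  assumes "mono f" "\<forall>n. f (m * n) \<le> c * f n" "2 \<le> m" "c \<ge> 1" "\<forall>n. 0 \<le> f n"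
  shows "f (m ^ j * n) \<le> c ^ j * f n"
proof (induction j)
  case 0 then show ?case by simp
next
  case (Suc j)
  have "f (m ^ Suc j * n) = f (m * (m ^ j * n))" by (simp add: mult.assoc)
  also have "\<dots> \<le> c * f (m ^ j * n)" using assms by auto
  also have "\<dots> \<le> c * (c ^ j * f n)" using Suc assms by (intro mult_left_mono) auto
  finally show ?case by simp
qed

lemma mult_any:
  fixes f :: "nat \<Rightarrow> real"
  assumes "mono f" "\<forall>n. f (m * n) \<le> c * f n" "2 \<le> m" "\<forall>n. 0 \<le> f n" "p \<ge> 1"
  shows "\<exists>d\<ge>0. \<forall>n. f (p * n) \<le> d * f n"
proof -
  define c' where "c' = max c 1"
  have h: "\<forall>n. f (m * n) \<le> c' * f n"
  proof
    fix n show "f (m * n) \<le> c' * f n" using assms(2,4)[rule_format, of n]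
      unfolding c'_def by (meson max.cobounded1 mult_right_mono order_trans)
  qed
  have "p < 2 ^ p" by (rule less_exp)
  also have "(2::nat) ^ p \<le> m ^ p" using assms(3) by (rule power_mono) simp
  finally have "p < m ^ p" .
  then have "p * n \<le> m ^ p * n" for n by auto
  then have "f (p * n) \<le> c' ^ p * f n" for n
    using mult_iter[OF assms(1) h assms(3) _ assms(4), of p n] assms(1) unfolding c'_def mono_def
    by (meson max.cobounded2 order_trans)
  moreover have "c' ^ p \<ge> 0" unfolding c'_def by simp
  ultimately show ?thesis by blast
qed

definition QL :: "(nat \<Rightarrow> real) \<Rightarrow> bool" where
  "QL a \<longleftrightarrow> (\<exists>m::nat. 2 \<le> m \<and> (\<exists>c. \<forall>n. a (m * n) \<le> c * a n))"

lemma QL_max: assumes "Oseq a" "Oseq b" "QL a" "QL b" shows "QL (\<lambda>n. max (a n) (b n))"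
proof -
  obtain m c where m: "2 \<le> m" "\<forall>n. a (m * n) \<le> c * a n" using assms(3) unfolding QL_def by blast
  obtain m' c' where m': "2 \<le> m'" "\<forall>n. b (m' * n) \<le> c' * b n" using assms(4) unfolding QL_def by blast
  have "m * m' \<ge> 1" using m m' by auto
  obtain d where d: "d \<ge> 0" "\<forall>n. a (m*m' * n) \<le> d * a n"
    using mult_any[OF _ m(2) m(1) _ \<open>m*m' \<ge> 1\<close>] assms(1) unfolding Oseq_def by blast
  obtain d' where d': "d' \<ge> 0" "\<forall>n. b (m*m' * n) \<le> d' * b n"
    using mult_any[OF _ m'(2) m'(1) _ \<open>m*m' \<ge> 1\<close>] assms(2) unfolding Oseq_def by blast
  have "\<forall>n. max (a (m*m'*n)) (b (m*m'*n)) \<le> max d d' * max (a n) (b n)"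
  proof
    fix n
    have an: "0 \<le> a n" "0 \<le> b n" using assms unfolding Oseq_def by auto
    have "a (m*m'*n) \<le> max d d' * max (a n) (b n)"
    proof -
      have "a (m*m'*n) \<le> d * a n" using d by auto
      also have "\<dots> \<le> max d d' * a n" using an by (intro mult_right_mono) auto
      also have "\<dots> \<le> max d d' * max (a n) (b n)"
        using d d' by (intro mult_left_mono) auto
      finally show ?thesis .
    qed
    moreover have "b (m*m'*n) \<le> max d d' * max (a n) (b n)"
    proof -
      have "b (m*m'*n) \<le> d' * b n" using d' by auto
      also have "\<dots> \<le> max d d' * b n" using an by (intro mult_right_mono) auto
      also have "\<dots> \<le> max d d' * max (a n) (b n)"
        using d d' by (intro mult_left_mono) auto
      finally show ?thesis .
    qed
    ultimately show "max (a (m*m'*n)) (b (m*m'*n)) \<le> max d d' * max (a n) (b n)" by simp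
  qed
  moreover have "2 * 1 \<le> m * m'" using m m' by (intro mult_le_mono) auto
  ultimately show ?thesis unfolding QL_def by auto
qed

lemma LL_QL: assumes "A \<in> LL" shows "\<exists>a\<in>A. QL a"
proof -
  obtain a m where a: "A \<in> Oclasses" "a \<in> A" "2 \<le> m" "cls (\<lambda>n. a (m * n)) = cls a"
    using assms unfolding LL_def by blast
  have "Oseq a" using mem_Oclasses a by blast
  then have "a \<in> cls (\<lambda>n. a (m * n))" using a(4) self_cls by auto
  then have "approx (\<lambda>n. a (m * n)) a" unfolding cls_def by auto
  then have "approx a (\<lambda>n. a (m * n))" by (rule approx_sym)
  then obtain c2 where "\<forall>n. a (m*n) \<le> c2 * a n" unfolding approx_def by blast
  then show ?thesis using a unfolding QL_def by blast
qed

lemma QL_LL: assumes "Oseq a" "QL a" shows "cls a \<in> LL"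
proof -
  obtain m c where m: "2 \<le> m" "\<forall>n. a (m * n) \<le> c * a n" using assms unfolding QL_def by blast
  define c' where "c' = max c 1"
  have "\<forall>n. 1 * a n \<le> a (m * n) \<and> a (m * n) \<le> c' * a n"
  proof
    fix n
    have "n \<le> m * n" using m by auto
    then have "a n \<le> a (m*n)" using assms(1) unfolding Oseq_def mono_def by auto
    moreover have "c * a n \<le> c' * a n" using assms(1) unfolding c'_def Oseq_def
      by (intro mult_right_mono) auto
    ultimately show "1 * a n \<le> a (m * n) \<and> a (m * n) \<le> c' * a n" using m(2)[rule_format, of n] by simp
  qed
  then have "approx a (\<lambda>n. a (m * n))" unfolding approx_def c'_def
    by (intro exI[of _ 1] exI[of _ "max c 1"]) auto
  then have "cls (\<lambda>n. a (m * n)) = cls a" using approx_cls by metis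
  then show ?thesis unfolding LL_def using assms self_cls cls_Oclasses m by blast
qed

lemma BB_char: "A \<in> BB \<longleftrightarrow> A \<in> Oclasses \<and> (\<exists>a\<in>A. \<exists>C>0. \<forall>n. a (Suc n) \<le> C * a n)"
  unfolding BB_def by auto

lemma QB_max:
  assumes "Oseq a" "Oseq b" "\<exists>C>0. \<forall>n. a (Suc n) \<le> C * a n" "\<exists>C>0. \<forall>n. b (Suc n) \<le> C * b n"
  shows "\<exists>C>0. \<forall>n. max (a (Suc n)) (b (Suc n)) \<le> C * max (a n) (b n)"
proof -
  obtain C where C: "C > 0" "\<forall>n. a (Suc n) \<le> C * a n" using assms by blast
  obtain D where D: "D > 0" "\<forall>n. b (Suc n) \<le> D * b n" using assms by blast
  have "\<forall>n. max (a (Suc n)) (b (Suc n)) \<le> max C D * max (a n) (b n)"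
  proof
    fix n
    have an: "0 \<le> a n" "0 \<le> b n" using assms unfolding Oseq_def by auto
    have "C * a n \<le> max C D * max (a n) (b n)" using C an by (intro mult_mono) auto
    moreover have "D * b n \<le> max C D * max (a n) (b n)" using D an by (intro mult_mono) auto
    ultimately show "max (a (Suc n)) (b (Suc n)) \<le> max C D * max (a n) (b n)"
      using C D by (meson max.boundedI order_trans)
  qed
  moreover have "max C D > 0" using C by auto
  ultimately show ?thesis by blast
qed

theorem lemma3p1:
  assumes "\<Gamma> \<subseteq> Oclasses" and "countable \<Gamma>"
  shows "(\<exists>T. T \<subseteq> Oclasses \<and> countable T \<and> Ototal T \<and> DM_sup T = DM_sup \<Gamma>)
       \<and> (\<Gamma> \<subseteq> BB \<longrightarrow> (\<exists>T. T \<subseteq> BB \<and> countable T \<and> Ototal T \<and> DM_sup T = DM_sup \<Gamma>))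
       \<and> (\<Gamma> \<subseteq> LL \<longrightarrow> (\<exists>T. T \<subseteq> LL \<and> countable T \<and> Ototal T \<and> DM_sup T = DM_sup \<Gamma>))"
proof (cases "\<Gamma> = {}")
  case True
  then show ?thesis unfolding Ototal_def by auto
next
  case ne: False
  have p1: "\<exists>T. T \<subseteq> Oclasses \<and> countable T \<and> Ototal T \<and> DM_sup T = DM_sup \<Gamma>"
  proof -
    have "\<forall>A\<in>\<Gamma>. \<exists>a\<in>A. True" using Oclasses_ne assms(1) by blast
    from generic[OF assms ne this] obtain T where
      "T \<subseteq> Oclasses" "countable T" "Ototal T" "DM_sup T = DM_sup \<Gamma>" by blast
    then show ?thesis by blast
  qed
  have p2: "\<exists>T. T \<subseteq> BB \<and> countable T \<and> Ototal T \<and> DM_sup T = DM_sup \<Gamma>" if h: "\<Gamma> \<subseteq> BB"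
  proof -
    have ex: "\<forall>A\<in>\<Gamma>. \<exists>a\<in>A. \<exists>C>0. \<forall>n. a (Suc n) \<le> C * a n"
      using h unfolding BB_def by blast
    have cl: "\<And>a b. Oseq a \<Longrightarrow> Oseq b \<Longrightarrow> (\<exists>C>0. \<forall>n. a (Suc n) \<le> C * a n) \<Longrightarrow>
       (\<exists>C>0. \<forall>n. b (Suc n) \<le> C * b n) \<Longrightarrow>
       (\<exists>C>0. \<forall>n. max (a (Suc n)) (b (Suc n)) \<le> C * max (a n) (b n))"
      by (rule QB_max)
    from generic[OF assms ne ex cl] obtain T where T:
      "\<forall>A\<in>T. \<exists>a. Oseq a \<and> (\<exists>C>0. \<forall>n. a (Suc n) \<le> C * a n) \<and> A = cls a"
      "countable T" "Ototal T" "DM_sup T = DM_sup \<Gamma>" by blast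
    have "T \<subseteq> BB"
    proof
      fix A assume "A \<in> T"
      then obtain a where a: "Oseq a" "\<exists>C>0. \<forall>n. a (Suc n) \<le> C * a n" "A = cls a" using T(1) by blast
      have "a \<in> A" "A \<in> Oclasses" using a self_cls cls_Oclasses by auto
      then show "A \<in> BB" unfolding BB_def using a(2) by blast
    qed
    then show ?thesis using T by blast
  qed
  have p3: "\<exists>T. T \<subseteq> LL \<and> countable T \<and> Ototal T \<and> DM_sup T = DM_sup \<Gamma>" if h: "\<Gamma> \<subseteq> LL"
  proof -
    have ex: "\<forall>A\<in>\<Gamma>. \<exists>a\<in>A. QL a" using h LL_QL by blast
    from generic[OF assms ne ex QL_max] obtain T where T:
      "\<forall>A\<in>T. \<exists>a. Oseq a \<and> QL a \<and> A = cls a"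
      "countable T" "Ototal T" "DM_sup T = DM_sup \<Gamma>" by blast
    have "T \<subseteq> LL"
    proof
      fix A assume "A \<in> T"
      then obtain a where a: "Oseq a" "QL a" "A = cls a" using T(1) by blast
      then show "A \<in> LL" using QL_LL by simp
    qed
    then show ?thesis using T by blast
  qed
  show ?thesis using p1 p2 p3 by blast
qed

end
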